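(* Let $M$ be a maximal ideal of a commutative semigroup $S$. The following are equivalent: (i) $M$ is a prime ideal; (ii) $\mathrm{Sep}\,M\neq\emptyset$; (iii) the factor semigroup $S/P_M$ is a two-element monoid with a zero.
   Context: A proper ideal $I$ of $S$ (i.e. $I\neq S$) is prime if $ab\in I$ implies $a\in I$ or $b\in I$. A proper ideal $M$ is maximal if for every ideal $A$ with $M\subseteq A\subseteq S$ we have $A=M$ or $A=S$. For $A\subseteq S$: $\mathrm{Id}\,A=\{x\in S: xA\subseteq A,\ Ax\subseteq A\}$ and $\mathrm{Sep}\,A=\mathrm{Id}\,A\cap\mathrm{Id}(S\setminus A)$. For $H\subseteq S$, $a\in S$: $H\dots a=\{(x,y)\in S\times S: xay\in H\}$ and $P_H=\{(a,b)\in S\times S: H\dots a=H\dots b\}$. *)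

theory Defs
  imports Main
begin

text \<open>The commutative semigroup S is the whole type 'a (class ab_semigroup_mult).
  Ideals of a semigroup are nonempty subsets I with SI and IS contained in I.\<close>

definition sg_ideal :: "'a::semigroup_mult set \<Rightarrow> bool" where
  "sg_ideal I \<longleftrightarrow> I \<noteq> {} \<and> (\<forall>s a. a \<in> I \<longrightarrow> s * a \<in> I \<and> a * s \<in> I)"

definition prime_ideal :: "'a::semigroup_mult set \<Rightarrow> bool" where
  "prime_ideal I \<longleftrightarrow> sg_ideal I \<and> I \<noteq> UNIV \<and>
     (\<forall>a b. a * b \<in> I \<longrightarrow> a \<in> I \<or> b \<in> I)"

definition maximal_ideal :: "'a::semigroup_mult set \<Rightarrow> bool" where
  "maximal_ideal M \<longleftrightarrow> sg_ideal M \<and> M \<noteq> UNIV \<and>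
     (\<forall>A. sg_ideal A \<and> M \<subseteq> A \<longrightarrow> A = M \<or> A = UNIV)"

definition Idl :: "'a::semigroup_mult set \<Rightarrow> 'a set" where
  "Idl A = {x. (\<forall>a\<in>A. x * a \<in> A \<and> a * x \<in> A)}"

definition Sep :: "'a::semigroup_mult set \<Rightarrow> 'a set" where
  "Sep A = Idl A \<inter> Idl (UNIV - A)"

definition ctx :: "'a::semigroup_mult set \<Rightarrow> 'a \<Rightarrow> ('a \<times> 'a) set" where
  "ctx H a = {(x, y). x * a * y \<in> H}"

definition P_rel :: "'a::semigroup_mult set \<Rightarrow> ('a \<times> 'a) set" where
  "P_rel H = {(a, b). ctx H a = ctx H b}"

definition qmult :: "('a::semigroup_mult \<times> 'a) set \<Rightarrow> 'a set \<Rightarrow> 'a set \<Rightarrow> 'a set" where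
  "qmult P X Y = (\<Union>x\<in>X. \<Union>y\<in>Y. P `` {x * y})"

definition two_elem_monoid_with_zero :: "('a::semigroup_mult \<times> 'a) set \<Rightarrow> bool" where
  "two_elem_monoid_with_zero P \<longleftrightarrow> card (UNIV // P) = 2 \<and>
     (\<exists>e\<in>UNIV // P. \<forall>C\<in>UNIV // P. qmult P e C = C \<and> qmult P C e = C) \<and>
     (\<exists>z\<in>UNIV // P. \<forall>C\<in>UNIV // P. qmult P z C = z \<and> qmult P C z = z)"

end

theory Submission
  imports Defs
begin

lemma ideal_mem: "sg_ideal I \<Longrightarrow> a \<in> I \<Longrightarrow> s * a \<in> I \<and> a * s \<in> I"
  unfolding sg_ideal_def by blast

lemma ctx_mem: "sg_ideal M \<Longrightarrow> a \<in> M \<Longrightarrow> ctx M a = UNIV"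
  unfolding ctx_def using ideal_mem by fastforce

lemma prime_ctx:
  assumes "prime_ideal (M::'a::ab_semigroup_mult set)" "a \<notin> M"
  shows "ctx M a = {(x,y). x \<in> M \<or> y \<in> M}"
proof -
  have I: "sg_ideal M" and p: "\<And>u v. u * v \<in> M \<Longrightarrow> u \<in> M \<or> v \<in> M"
    using assms(1) unfolding prime_ideal_def by auto
  show ?thesis unfolding ctx_def
  proof (auto)
    fix x y assume "x * a * y \<in> M" "y \<notin> M"
    then show "x \<in> M" using p assms(2) by blast
  next
    fix x y assume "x \<in> M" then show "x * a * y \<in> M"
      using ideal_mem[OF I] by blast
  next
    fix x y assume "y \<in> M" then show "x * a * y \<in> M"
      using ideal_mem[OF I] by blast
  qed
qed

lemma prime_cls:
  assumes "prime_ideal (M::'a::ab_semigroup_mult set)"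
  shows "P_rel M `` {a} = (if a \<in> M then M else - M)"
proof -
  have I: "sg_ideal M" and nU: "M \<noteq> UNIV"
    using assms unfolding prime_ideal_def by auto
  obtain z where z: "z \<notin> M" using nU by blast
  have ne: "{(x,y). x \<in> M \<or> y \<in> M} \<noteq> (UNIV :: ('a\<times>'a) set)"
    using z by auto
  have c: "ctx M b = (if b \<in> M then UNIV else {(x,y). x \<in> M \<or> y \<in> M})" for b
    using ctx_mem[OF I] prime_ctx[OF assms] by auto
  show ?thesis unfolding P_rel_def using ne by (auto simp: c split: if_splits)
qed

lemma union_const:
  assumes "X \<noteq> {}" "Y \<noteq> {}" "\<And>x y. x \<in> X \<Longrightarrow> y \<in> Y \<Longrightarrow> f x y = K"
  shows "(\<Union>x\<in>X. \<Union>y\<in>Y. f x y) = K"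
proof -
  obtain x0 y0 where "x0 \<in> X" "y0 \<in> Y" using assms by blast
  then show ?thesis using assms(3) by blast
qed

lemma quot_eq: "UNIV // r = range (\<lambda>a. r `` {a})"
  unfolding quotient_def by auto

lemma qmult_eq: "qmult P X Y = (\<Union>x\<in>X. \<Union>y\<in>Y. P `` {x * y})"
  by (simp add: qmult_def)

lemma prime_two:
  assumes "prime_ideal (M::'a::ab_semigroup_mult set)"
  shows "two_elem_monoid_with_zero (P_rel M)"
proof -
  have I: "sg_ideal M" and nU: "M \<noteq> UNIV" and p: "\<And>u v. u * v \<in> M \<Longrightarrow> u \<in> M \<or> v \<in> M"
    using assms unfolding prime_ideal_def by auto
  obtain z where z: "z \<notin> M" using nU by blast
  obtain m where m: "m \<in> M" using I unfolding sg_ideal_def by blast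
  have Q: "UNIV // P_rel M = {M, -M}"
    unfolding quot_eq prime_cls[OF assms] using z m by auto
  have neq: "M \<noteq> - M" using m by auto
  have cl: "P_rel M `` {x} = (if x \<in> M then M else - M)" for x using prime_cls[OF assms] .
  have mL: "x * y \<in> M" if "y \<in> M" for x y using ideal_mem[OF I that] by blast
  have mR: "x * y \<in> M" if "x \<in> M" for x y using ideal_mem[OF I that] by blast
  have mN: "x * y \<notin> M" if "x \<notin> M" "y \<notin> M" for x y using p that by blast
  have zne: "- M \<noteq> {}" using z by blast
  have mne: "M \<noteq> {}" using m by blast
  have a1: "qmult (P_rel M) (-M) M = M"
    unfolding qmult_eq by (rule union_const[OF zne mne]) (simp add: cl mL)
  have a2: "qmult (P_rel M) M (-M) = M"
    unfolding qmult_eq by (rule union_const[OF mne zne]) (simp add: cl mR)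
  have a3: "qmult (P_rel M) M M = M"
    unfolding qmult_eq by (rule union_const[OF mne mne]) (simp add: cl mR)
  have a4: "qmult (P_rel M) (-M) (-M) = -M"
    unfolding qmult_eq by (rule union_const[OF zne zne]) (simp add: cl mN)
  show ?thesis unfolding two_elem_monoid_with_zero_def Q
  proof (intro conjI)
    show "card {M, - M} = 2" using neq by simp
    show "\<exists>e\<in>{M, - M}. \<forall>C\<in>{M, - M}. qmult (P_rel M) e C = C \<and> qmult (P_rel M) C e = C"
      using a1 a2 a4 by blast
    show "\<exists>e\<in>{M, - M}. \<forall>C\<in>{M, - M}. qmult (P_rel M) e C = e \<and> qmult (P_rel M) C e = e"
      using a1 a2 a3 by blast
  qed
qed

lemma prime_Sep:
  assumes "maximal_ideal (M::'a::ab_semigroup_mult set)"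
  shows "prime_ideal M \<longleftrightarrow> Sep M \<noteq> {}"
proof
  assume pr: "prime_ideal M"
  have I: "sg_ideal M" and nU: "M \<noteq> UNIV" and p: "\<And>u v. u * v \<in> M \<Longrightarrow> u \<in> M \<or> v \<in> M"
    using pr unfolding prime_ideal_def by auto
  obtain z where z: "z \<notin> M" using nU by blast
  have "z \<in> Sep M" unfolding Sep_def Idl_def using ideal_mem[OF I] p z by blast
  then show "Sep M \<noteq> {}" by blast
next
  assume "Sep M \<noteq> {}"
  then obtain x where x: "x \<in> Sep M" by blast
  have I: "sg_ideal M" and nU: "M \<noteq> UNIV"
    and mx: "\<And>A. sg_ideal A \<Longrightarrow> M \<subseteq> A \<Longrightarrow> A = M \<or> A = UNIV"
    using assms unfolding maximal_ideal_def by auto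
  have xs: "\<And>a. a \<notin> M \<Longrightarrow> x * a \<notin> M"
    using x unfolding Sep_def Idl_def by auto
  have "\<forall>a b. a * b \<in> M \<longrightarrow> a \<in> M \<or> b \<in> M"
  proof (intro allI impI, rule ccontr)
    fix a b assume ab: "a * b \<in> M" and n: "\<not> (a \<in> M \<or> b \<in> M)"
    define J where "J = M \<union> {a} \<union> {a * s | s. True}"
    have "sg_ideal J" unfolding sg_ideal_def
    proof (intro conjI allI impI)
      show "J \<noteq> {}" unfolding J_def by blast
      fix s j assume j: "j \<in> J"
      have "j * s \<in> J" using j unfolding J_def
      proof (elim UnE)
        assume "j \<in> M" then show "j * s \<in> M \<union> {a} \<union> {a * s |s. True}" using ideal_mem[OF I] by blast
      next
        assume "j \<in> {a}" then show "j * s \<in> M \<union> {a} \<union> {a * s |s. True}" by blast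
      next
        assume "j \<in> {a * s |s. True}"
        then obtain t where "j = a * t" by blast
        then have "j * s = a * (t * s)" by (simp add: mult.assoc)
        then show "j * s \<in> M \<union> {a} \<union> {a * s |s. True}" by blast
      qed
      then show "j * s \<in> J" "s * j \<in> J" by (simp_all add: mult.commute)
    qed
    moreover have "M \<subseteq> J" "J \<noteq> M" using n unfolding J_def by auto
    ultimately have "J = UNIV" using mx by blast
    then have "x \<in> J" by blast
    moreover have "x \<notin> M"
    proof
      assume "x \<in> M"
      then have "x * a \<in> M" using ideal_mem[OF I] by blast
      then show False using xs n by blast
    qed
    ultimately have "x \<in> {a} \<union> {a * s | s. True}" unfolding J_def by blast
    then obtain s where "x = a \<or> x = a * s" by blast
    then have "x * b \<in> M"
    proof
      assume "x = a" then show ?thesis using ab by simp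
    next
      assume "x = a * s"
      then have "x * b = (a * b) * s" by (simp add: ac_simps)
      then show ?thesis using ideal_mem[OF I ab] by simp
    qed
    then show False using xs n by blast
  qed
  then show "prime_ideal M" unfolding prime_ideal_def using I nU by blast
qed

lemma cls_iff: "b \<in> P_rel M `` {a} \<longleftrightarrow> ctx M a = ctx M b"
  unfolding P_rel_def by simp

lemma two_prime:
  assumes mi: "maximal_ideal (M::'a::ab_semigroup_mult set)"
    and tw: "two_elem_monoid_with_zero (P_rel M)"
  shows "prime_ideal M"
proof -
  have I: "sg_ideal M" and nU: "M \<noteq> UNIV"
    and mx: "\<And>A. sg_ideal A \<Longrightarrow> M \<subseteq> A \<Longrightarrow> A = M \<or> A = UNIV"
    using mi unfolding maximal_ideal_def by auto
  obtain z where z: "z \<notin> M" using nU by blast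
  obtain m where m: "m \<in> M" using I unfolding sg_ideal_def by blast
  define cls where "cls a = P_rel M `` {a}" for a
  define Z where "Z = {b. ctx M b = UNIV}"
  have self: "a \<in> cls a" for a unfolding cls_def P_rel_def by simp
  have card2: "card (UNIV // P_rel M) = 2" using tw unfolding two_elem_monoid_with_zero_def by blast
  have fin: "finite (UNIV // P_rel M)" using card2 by (metis card.infinite zero_neq_numeral)
  have Qc: "cls a \<in> UNIV // P_rel M" for a unfolding cls_def quot_eq by blast
  have MZ: "M \<subseteq> Z" unfolding Z_def using ctx_mem[OF I] by blast
  have "sg_ideal Z" unfolding sg_ideal_def
  proof (intro conjI allI impI)
    show "Z \<noteq> {}" using MZ m by blast
    fix s b assume "b \<in> Z"
    then have h: "x * b * y \<in> M" for x y unfolding Z_def ctx_def by auto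
    have "x * (b * s) * y \<in> M" for x y using h[of x "s * y"] by (simp add: mult.assoc)
    then show "b * s \<in> Z" "s * b \<in> Z" unfolding Z_def ctx_def by (auto simp: mult.commute)
  qed
  then have "Z = M \<or> Z = UNIV" using mx MZ by blast
  moreover have "Z \<noteq> UNIV"
  proof
    assume ZU: "Z = UNIV"
    have "cls a = UNIV" for a
    proof -
      have "ctx M b = UNIV" for b using ZU unfolding Z_def by blast
      then show ?thesis unfolding cls_def P_rel_def by auto
    qed
    then have "UNIV // P_rel M = {UNIV}" unfolding quot_eq cls_def[symmetric] by auto
    then show False using card2 by simp
  qed
  ultimately have ZM: "Z = M" by blast
  have clsM: "cls a = M" if "a \<in> M" for a
  proof -
    have "ctx M a = UNIV" using ctx_mem[OF I that] .
    then show ?thesis unfolding cls_def using ZM unfolding Z_def P_rel_def by auto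
  qed
  have disj: "cls a \<inter> M = {}" if "a \<notin> M" for a
  proof (rule ccontr)
    assume "cls a \<inter> M \<noteq> {}"
    then obtain b where b: "b \<in> cls a" "b \<in> M" by blast
    then have "ctx M a = UNIV" using ctx_mem[OF I b(2)] unfolding cls_def P_rel_def by simp
    then have "a \<in> Z" unfolding Z_def by simp
    then show False using ZM that by simp
  qed
  have same: "cls a = cls c" if "a \<notin> M" "c \<notin> M" for a c
  proof (rule ccontr)
    assume ne: "cls a \<noteq> cls c"
    have n1: "cls a \<noteq> M" using self[of a] that(1) by blast
    have n2: "cls c \<noteq> M" using self[of c] that(2) by blast
    have "M \<in> UNIV // P_rel M" using clsM[OF m] Qc[of m] by simp
    then have "{M, cls a, cls c} \<subseteq> UNIV // P_rel M" using Qc[of a] Qc[of c] by blast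
    then have "card {M, cls a, cls c} \<le> 2" using card_mono[OF fin] card2 by (metis (no_types))
    moreover have "card {M, cls a, cls c} = 3" using ne n1 n2 by simp
    ultimately show False by simp
  qed
  obtain e where eQ: "e \<in> UNIV // P_rel M"
    and eid: "\<And>C. C \<in> UNIV // P_rel M \<Longrightarrow> qmult (P_rel M) e C = C"
  proof -
    have "\<exists>e\<in>UNIV // P_rel M. \<forall>C\<in>UNIV // P_rel M. qmult (P_rel M) e C = C \<and> qmult (P_rel M) C e = C"
      using tw unfolding two_elem_monoid_with_zero_def by (rule conjunct1[OF conjunct2])
    then show ?thesis using that by (meson bspec conjunct1)
  qed
  obtain c where ec: "e = cls c" using eQ unfolding quot_eq cls_def by (rule imageE)
  have cM: "c \<notin> M"
  proof
    assume "c \<in> M"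
    then have eM: "e = M" using ec clsM by simp
    have "qmult (P_rel M) e (cls z) = cls z" using eid Qc by blast
    moreover have "cls (m * z) \<subseteq> qmult (P_rel M) e (cls z)"
      unfolding qmult_eq eM cls_def[symmetric] using m self[of z] by blast
    moreover have "cls (m * z) = M" using clsM ideal_mem[OF I m] by blast
    ultimately have "M \<subseteq> cls z" by simp
    then have "m \<in> cls z" using m by (rule subsetD)
    then show False using disj[OF z] m by blast
  qed
  have "\<forall>a b. a * b \<in> M \<longrightarrow> a \<in> M \<or> b \<in> M"
  proof (intro allI impI, rule ccontr)
    fix a b assume ab: "a * b \<in> M" and n: "\<not> (a \<in> M \<or> b \<in> M)"
    have ae: "a \<in> e" using ec same[of a c] n cM self[of a] by simp
    have "qmult (P_rel M) e (cls b) = cls b" using eid Qc by blast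
    moreover have "cls (a * b) \<subseteq> qmult (P_rel M) e (cls b)"
      unfolding qmult_eq cls_def[symmetric] using ae self[of b] by blast
    ultimately have "cls (a * b) \<subseteq> cls b" by simp
    then have "a * b \<in> cls b" using self[of "a*b"] by (rule subsetD)
    then show False using disj[of b] n ab by blast
  qed
  then show ?thesis unfolding prime_ideal_def using I nU by blast
qed

theorem theorem2:
  fixes M :: "'a::ab_semigroup_mult set"
  assumes "maximal_ideal M"
  shows "(prime_ideal M \<longleftrightarrow> Sep M \<noteq> {}) \<and>
         (Sep M \<noteq> {} \<longleftrightarrow> two_elem_monoid_with_zero (P_rel M))"
  using prime_Sep[OF assms] prime_two two_prime[OF assms] by blast

end
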